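(* For every countable ordinal $\lambda<\omega_1$ there is a continuous map $g_\lambda:[0,1]\to[0,1]$ such that the chain components poset $(\mathfrak{C}_{g_\lambda},\preceq)$ is order isomorphic to $(\lambda+1,\ni)$, i.e. to the reverse of the usual order on the ordinal $\lambda+1$.
   Context: For a map $g:[0,1]\to[0,1]$ with the usual metric: an $\varepsilon$-chain from $x$ to $y$ is a finite sequence $x_0=x,\dots,x_n=y$, $n\ge1$, with $|g(x_i)-x_{i+1}|<\varepsilon$; $x\,\mathcal{C}\,y$ iff for every $\varepsilon>0$ there is an $\varepsilon$-chain from $x$ to $y$; $CR_g=\{x:x\,\mathcal{C}\,x\}$; $x\,E\,y$ iff $x\,\mathcal{C}\,y$ and $y\,\mathcal{C}\,x$; $\mathfrak{C}_g=CR_g/E$ is the set of chain components, partially ordered by $[x]\preceq[y]$ iff $y\,\mathcal{C}\,x$. *)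

theory Defs
  imports "HOL-Analysis.Analysis"
begin

definition eps_chain :: "(real \<Rightarrow> real) \<Rightarrow> real \<Rightarrow> real \<Rightarrow> real \<Rightarrow> bool" where
  "eps_chain g \<epsilon> x y \<longleftrightarrow>
     (\<exists>n::nat. n \<ge> 1 \<and> (\<exists>xs::nat \<Rightarrow> real.
        xs 0 = x \<and> xs n = y \<and> (\<forall>i\<le>n. xs i \<in> {0..1}) \<and>
        (\<forall>i<n. \<bar>g (xs i) - xs (Suc i)\<bar> < \<epsilon>)))"

definition chain_rel :: "(real \<Rightarrow> real) \<Rightarrow> real \<Rightarrow> real \<Rightarrow> bool" where
  "chain_rel g x y \<longleftrightarrow> (\<forall>\<epsilon>>0. eps_chain g \<epsilon> x y)"

definition chain_recurrent :: "(real \<Rightarrow> real) \<Rightarrow> real set" where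
  "chain_recurrent g = {x \<in> {0..1}. chain_rel g x x}"

definition chain_equiv :: "(real \<Rightarrow> real) \<Rightarrow> (real \<times> real) set" where
  "chain_equiv g = {(x, y). x \<in> chain_recurrent g \<and> y \<in> chain_recurrent g \<and>
                            chain_rel g x y \<and> chain_rel g y x}"

definition chain_components :: "(real \<Rightarrow> real) \<Rightarrow> real set set" where
  "chain_components g = chain_recurrent g // chain_equiv g"

text \<open>[x] \<preceq> [y] iff y C x (independent of representatives).\<close>
definition comp_le :: "(real \<Rightarrow> real) \<Rightarrow> real set \<Rightarrow> real set \<Rightarrow> bool" where
  "comp_le g A B \<longleftrightarrow> (\<exists>x\<in>A. \<exists>y\<in>B. chain_rel g y x)"

text \<open>Successor ordinal of a well-order r (as a reflexive well-order relation):
  a new top element None is added.\<close>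
definition ord_succ :: "('a \<times> 'a) set \<Rightarrow> ('a option \<times> 'a option) set" where
  "ord_succ r = {(Some a, Some b) | a b. (a, b) \<in> r} \<union>
                {(x, None) | x. x \<in> insert None (Some ` Field r)}"

end

theory Submission imports Defs begin

definition wt :: "nat set \<Rightarrow> nat \<Rightarrow> real" where
  "wt S n = (if n \<in> S then (1/2)^Suc n else 0)"

definition mu :: "nat set \<Rightarrow> real" where
  "mu S = suminf (wt S)"

lemma wt_nonneg: "0 \<le> wt S n" by (simp add: wt_def)

lemma summable_wt: "summable (wt S)"
proof (rule summable_comparison_test'[where g="\<lambda>n. (1/2::real)^Suc n" and N=0])
  show "summable (\<lambda>n. (1/2::real)^Suc n)" by (simp add: summable_geometric)
  show "\<And>n. 0 \<le> n \<Longrightarrow> norm (wt S n) \<le> (1/2)^Suc n" by (simp add: wt_def)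
qed

lemma mu_nonneg: "0 \<le> mu S"
  unfolding mu_def by (rule suminf_nonneg[OF summable_wt wt_nonneg])

lemma mu_mono: "S \<subseteq> T \<Longrightarrow> mu S \<le> mu T"
  unfolding mu_def by (rule suminf_le[OF _ summable_wt summable_wt]) (auto simp: wt_def)

lemma mu_le1: "mu S \<le> 1"
proof -
  have "mu S \<le> mu UNIV" by (rule mu_mono) simp
  also have "mu UNIV = 1"
  proof -
    have "(\<lambda>n. (1/2::real)^Suc n) sums ((1/2) * (1 / (1 - 1/2)))"
      using sums_mult[OF geometric_sums[of "1/2::real"], of "1/2"] by simp
    then show ?thesis unfolding mu_def wt_def by (simp add: sums_iff)
  qed
  finally show ?thesis .
qed

lemma mu_strict: assumes "insert n S \<subseteq> T" "n \<notin> S" shows "mu S < mu T"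
proof -
  have "0 < (\<Sum>k. wt T k - wt S k)"
  proof (subst suminf_pos_iff)
    show "summable (\<lambda>k. wt T k - wt S k)" using summable_wt by (rule summable_diff) (rule summable_wt)
    show "\<And>k. 0 \<le> wt T k - wt S k" using assms by (auto simp: wt_def)
    show "\<exists>i. 0 < wt T i - wt S i" using assms by (intro exI[of _ n]) (auto simp: wt_def)
  qed
  also have "\<dots> = mu T - mu S" unfolding mu_def by (rule suminf_diff[symmetric]) (rule summable_wt)+
  finally show ?thesis by simp
qed

lemma mu_approx:
  assumes "\<And>G. finite G \<Longrightarrow> G \<subseteq> S \<Longrightarrow> mu G \<le> y"
  shows "mu S \<le> y"
  unfolding mu_def
proof (rule suminf_le_const[OF summable_wt])
  fix N
  have "mu (S \<inter> {..<N}) = (\<Sum>n\<in>{..<N}. wt (S \<inter> {..<N}) n)"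
    unfolding mu_def by (rule suminf_finite) (auto simp: wt_def)
  also have "\<dots> = sum (wt S) {..<N}" by (rule sum.cong) (auto simp: wt_def)
  finally show "sum (wt S) {..<N} \<le> y" using assms[of "S \<inter> {..<N}"] by simp
qed

locale dyn =
  fixes F :: "real set"
  assumes Fcl: "closed F" and Fsub: "F \<subseteq> {0..1}" and F1: "1 \<in> F" and Fcount: "countable F"
begin

definition gg :: "real \<Rightarrow> real" where "gg x = x + infdist x F / 2"

lemma Fne: "F \<noteq> {}" using F1 by auto

lemma gg_ge: "x \<le> gg x" by (simp add: gg_def infdist_nonneg)

lemma gg_fix_iff: "gg x = x \<longleftrightarrow> x \<in> F"
  using in_closed_iff_infdist_zero[OF Fcl Fne, of x] by (simp add: gg_def)

lemma gg_mono: assumes "x \<le> y" shows "gg x \<le> gg y"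
proof -
  have "infdist x F \<le> infdist y F + dist x y" by (rule infdist_triangle)
  with assms show ?thesis by (simp add: gg_def dist_real_def)
qed

lemma gg_cont: "continuous_on {0..1} gg"
  unfolding gg_def by (intro continuous_intros) auto

lemma gg_range: "gg ` {0..1} \<subseteq> {0..1}"
proof clarsimp
  fix x :: real assume x: "0 \<le> x" "x \<le> 1"
  have "infdist x F \<le> dist x 1" by (rule infdist_le[OF F1])
  with x show "0 \<le> gg x \<and> gg x \<le> 1" using gg_ge[of x] by (simp add: gg_def dist_real_def)
qed

lemma barrier:
  assumes p: "p \<notin> F" and e: "0 < e" "e \<le> gg p - p" and a: "p \<le> xs 0"
    and ch: "\<forall>i<n. \<bar>gg (xs i) - xs (Suc i)\<bar> < e" and n: "n \<ge> 1"
  shows "p < xs n"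
proof -
  have "\<forall>i. i < n \<longrightarrow> p < xs (Suc i)"
  proof (intro allI)
    fix i show "i < n \<longrightarrow> p < xs (Suc i)"
    proof (induction i)
      case 0
      show ?case using gg_mono[OF a] ch e by force
    next
      case (Suc i)
      show ?case
      proof
        assume "Suc i < n"
        then have "p < xs (Suc i)" using Suc by simp
        then have "gg p \<le> gg (xs (Suc i))" by (intro gg_mono) simp
        moreover have "\<bar>gg (xs (Suc i)) - xs (Suc (Suc i))\<bar> < e" using ch \<open>Suc i < n\<close> by blast
        ultimately show "p < xs (Suc (Suc i))" using e by linarith
      qed
    qed
  qed
  then show ?thesis using n by (metis Suc_diff_1 diff_less less_le_trans zero_less_one)
qed

lemma no_chain_back:
  assumes p: "p \<notin> F" "y \<le> p" "p \<le> x"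
  shows "\<not> chain_rel gg x y"
proof
  assume c: "chain_rel gg x y"
  have pos: "0 < gg p - p" using gg_ge[of p] gg_fix_iff[of p] p by linarith
  then obtain n xs where "n \<ge> 1" "xs 0 = x" "xs n = y"
     "\<forall>i<n. \<bar>gg (xs i) - xs (Suc i)\<bar> < gg p - p"
    using c unfolding chain_rel_def eps_chain_def by blast
  with barrier[OF p(1) pos order_refl, of xs n] p show False by auto
qed

lemma chain_fwd:
  assumes ab: "a \<le> b" "0 \<le> a" "b \<in> F" and e: "0 < e"
  shows "eps_chain gg e a b"
proof -
  have b1: "b \<le> 1" using ab Fsub by auto
  have gb: "gg b = b" using gg_fix_iff ab by simp
  define f where "f = (\<lambda>y. min b (gg y + e/2))"
  define xs where "xs = (\<lambda>k. (f ^^ k) a)"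
  have xsS: "xs (Suc k) = f (xs k)" for k by (simp add: xs_def)
  have inv: "a \<le> xs k \<and> xs k \<le> b \<and> min b (a + real k * e / 2) \<le> xs k" for k
  proof (induction k)
    case 0 then show ?case using ab by (simp add: xs_def)
  next
    case (Suc k)
    have "gg (xs k) \<le> b" using gg_mono[of "xs k" b] Suc gb by simp
    moreover have "xs k \<le> gg (xs k)" by (rule gg_ge)
    moreover have "min b (a + real (Suc k) * e / 2) \<le> gg (xs k) + e / 2"
    proof (cases "a + real k * e / 2 \<le> b")
      case True
      then have "a + real k * e / 2 \<le> xs k" using Suc by simp
      then have "a + real (Suc k) * e / 2 \<le> gg (xs k) + e / 2" using \<open>xs k \<le> gg (xs k)\<close> by (simp add: field_simps)
      then show ?thesis by linarith
    next
      case False then show ?thesis using Suc \<open>xs k \<le> gg (xs k)\<close> e by auto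
    qed
    ultimately show ?case using Suc e ab unfolding xsS f_def by auto
  qed
  have step: "\<bar>gg (xs k) - xs (Suc k)\<bar> < e" for k
  proof -
    have "gg (xs k) \<le> b" using gg_mono[of "xs k" b] inv[of k] gb by simp
    then show ?thesis using e unfolding xsS f_def by auto
  qed
  define n where "n = nat \<lceil>2 * (b - a) / e\<rceil> + 1"
  have "2 * (b - a) / e \<le> real n" unfolding n_def by linarith
  then have "2 * (b - a) \<le> real n * e" using e by (simp add: field_simps)
  then have "b \<le> a + real n * e / 2" by simp
  then have "xs n = b" using inv[of n] by simp
  moreover have "\<forall>i\<le>n. xs i \<in> {0..1}" using inv ab b1 by (meson atLeastAtMost_iff order_trans)
  moreover have "n \<ge> 1" by (simp add: n_def)
  ultimately show ?thesis unfolding eps_chain_def using step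
    by (intro exI[of _ n] conjI exI[of _ xs]) (auto simp: xs_def)
qed

lemma chain_rel_F: assumes "a \<in> F" "b \<in> F" shows "chain_rel gg a b \<longleftrightarrow> a \<le> b"
proof
  assume "a \<le> b" then show "chain_rel gg a b"
    using chain_fwd assms Fsub unfolding chain_rel_def by auto
next
  assume c: "chain_rel gg a b"
  show "a \<le> b"
  proof (rule ccontr)
    assume "\<not> a \<le> b"
    then have "uncountable {b<..<a}" by (simp add: uncountable_open_interval)
    then obtain p where "p \<in> {b<..<a}" "p \<notin> F" using Fcount
      by (metis countable_subset subsetI)
    with no_chain_back[of p b a] c show False by auto
  qed
qed

lemma CR: "chain_recurrent gg = F"
proof (intro set_eqI iffI)
  fix x assume "x \<in> chain_recurrent gg"
  then have "chain_rel gg x x" unfolding chain_recurrent_def by auto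
  then show "x \<in> F" using no_chain_back[of x x x] by auto
next
  fix x assume "x \<in> F"
  then show "x \<in> chain_recurrent gg" using chain_rel_F[of x x] Fsub unfolding chain_recurrent_def by auto
qed

lemma CE: "chain_equiv gg = Id_on F"
  unfolding chain_equiv_def CR using chain_rel_F by (auto simp: Id_on_def)

lemma CC: "chain_components gg = (\<lambda>x. {x}) ` F"
  unfolding chain_components_def CR CE quotient_def by auto

lemma comp_le_F: "a \<in> F \<Longrightarrow> b \<in> F \<Longrightarrow> comp_le gg {a} {b} \<longleftrightarrow> b \<le> a"
  unfolding comp_le_def using chain_rel_F by auto

end
locale ordc =
  fixes r :: "('a \<times> 'a) set"
  assumes WO: "Well_order r" and CF: "countable (Field r)"
begin

abbreviation "R \<equiv> ord_succ r"
abbreviation "D \<equiv> insert None (Some ` Field r)"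

lemma wo: "wo_rel r" using WO by (simp add: wo_rel_def)

lemma rF: "(a,b) \<in> r \<Longrightarrow> a \<in> Field r \<and> b \<in> Field r" by (auto simp: Field_def)

lemma R_iff: "(u,v) \<in> R \<longleftrightarrow> (v = None \<and> u \<in> D) \<or> (\<exists>a b. u = Some a \<and> v = Some b \<and> (a,b) \<in> r)"
  unfolding ord_succ_def by auto

lemma r_refl: "a \<in> Field r \<Longrightarrow> (a,a) \<in> r"
  using wo_rel.REFL[OF wo] by (simp add: refl_on_def)
lemma r_trans: "(a,b) \<in> r \<Longrightarrow> (b,c) \<in> r \<Longrightarrow> (a,c) \<in> r"
  using wo_rel.TRANS[OF wo] by (rule transD)
lemma r_antisym: "(a,b) \<in> r \<Longrightarrow> (b,a) \<in> r \<Longrightarrow> a = b"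
  using wo_rel.ANTISYM[OF wo] by (rule antisymD)
lemma r_total: "a \<in> Field r \<Longrightarrow> b \<in> Field r \<Longrightarrow> (a,b) \<in> r \<or> (b,a) \<in> r"
  using wo_rel.TOTALS[OF wo] by blast

lemma R_refl: "u \<in> D \<Longrightarrow> (u,u) \<in> R" unfolding R_iff using r_refl by blast
lemma R_D: "(u,v) \<in> R \<Longrightarrow> u \<in> D \<and> v \<in> D"
  unfolding R_iff using rF by blast
lemma R_trans: assumes "(u,v) \<in> R" "(v,w) \<in> R" shows "(u,w) \<in> R"
proof (cases "w = None")
  case True then show ?thesis using R_D[OF assms(1)] by (simp add: R_iff)
next
  case False
  then obtain b c where "v = Some b" "w = Some c" "(b,c) \<in> r" using assms(2) unfolding R_iff by blast
  moreover obtain a where "u = Some a" "(a,b) \<in> r" using assms(1) calculation unfolding R_iff by blast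
  ultimately show ?thesis unfolding R_iff using r_trans by blast
qed
lemma R_antisym: "(u,v) \<in> R \<Longrightarrow> (v,u) \<in> R \<Longrightarrow> u = v"
  unfolding R_iff using r_antisym by blast
lemma R_total: "u \<in> D \<Longrightarrow> v \<in> D \<Longrightarrow> (u,v) \<in> R \<or> (v,u) \<in> R"
  unfolding R_iff using r_total by blast

lemma D_eq: "Field R = D"
proof (intro set_eqI iffI)
  fix u assume "u \<in> Field R"
  then obtain v where "(u,v) \<in> R \<or> (v,u) \<in> R" by (auto simp: Field_def)
  then show "u \<in> D" using R_D by blast
next
  fix u assume "u \<in> D" then have "(u, None) \<in> R" by (simp add: R_iff)
  then show "u \<in> Field R" by (auto simp: Field_def)
qed

definition e :: "'a \<Rightarrow> nat" where "e = to_nat_on (Field r)"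
lemma e_inj: "inj_on e (Field r)" unfolding e_def using CF by (rule inj_on_to_nat_on)

definition Bl :: "'a option \<Rightarrow> 'a set" where
  "Bl u = {b \<in> Field r. (Some b, u) \<in> R \<and> Some b \<noteq> u}"

definition cc :: real where "cc = 1 - mu (e ` Field r)"
definition psi :: "'a option \<Rightarrow> real" where "psi u = cc + mu (e ` Bl u)"

lemma Bl_None: "Bl None = Field r" unfolding Bl_def by (auto simp: R_iff)

lemma psi_None: "psi None = 1" unfolding psi_def cc_def Bl_None by simp

lemma cc_nonneg: "0 \<le> cc" unfolding cc_def using mu_le1 by simp

lemma psi_ge: "cc \<le> psi u" unfolding psi_def using mu_nonneg by simp

lemma psi_strict:
  assumes "(u,v) \<in> R" "u \<noteq> v" shows "psi u < psi v"
proof -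
  obtain a where u: "u = Some a" using assms by (auto simp: R_iff)
  have aF: "a \<in> Field r" using R_D[OF assms(1)] u by auto
  have sub: "Bl u \<subseteq> Bl v"
  proof
    fix b assume "b \<in> Bl u"
    then have "(Some b, u) \<in> R" "Some b \<noteq> u" "b \<in> Field r" by (auto simp: Bl_def)
    then show "b \<in> Bl v" using assms R_trans[of "Some b" u v] R_antisym[of "Some b" u] by (auto simp: Bl_def)
  qed
  have aB: "a \<in> Bl v" "a \<notin> Bl u" using assms aF u unfolding Bl_def by auto
  have "insert (e a) (e ` Bl u) \<subseteq> e ` Bl v" using sub aB by auto
  moreover have "e a \<notin> e ` Bl u"
    using aB aF e_inj unfolding Bl_def inj_on_def by auto
  ultimately show ?thesis unfolding psi_def using mu_strict by simp
qed

lemma psi_mono: "(u,v) \<in> R \<Longrightarrow> psi u \<le> psi v"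
  using psi_strict by (cases "u = v") force+

lemma psi_iff: assumes "u \<in> D" "v \<in> D" shows "(u,v) \<in> R \<longleftrightarrow> psi u \<le> psi v"
  using psi_mono psi_strict R_total[OF assms] by force

lemma psi_inj: "inj_on psi D"
proof (rule inj_onI)
  fix u v assume uv: "u \<in> D" "v \<in> D" "psi u = psi v"
  then have "(u,v) \<in> R" "(v,u) \<in> R" using psi_iff by auto
  then show "u = v" by (rule R_antisym)
qed

lemma psi_le1: "u \<in> D \<Longrightarrow> psi u \<le> 1"
  using psi_mono[of u None] psi_None by (auto simp: R_iff)

lemma least: assumes "A \<subseteq> D" "A \<noteq> {}" shows "\<exists>a\<in>A. \<forall>b\<in>A. (a,b) \<in> R"
proof (cases "A \<inter> Some ` Field r = {}")
  case True
  then have "A = {None}" using assms by auto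
  then show ?thesis by (auto simp: R_iff)
next
  case False
  define B where "B = {b \<in> Field r. Some b \<in> A}"
  have B: "B \<subseteq> Field r" "B \<noteq> {}" using False B_def by auto
  define m where "m = wo_rel.minim r B"
  have m: "m \<in> B" "\<And>b. b \<in> B \<Longrightarrow> (m,b) \<in> r"
    using wo_rel.minim_in[OF wo B] wo_rel.minim_least[OF wo B(1)] m_def by auto
  show ?thesis
  proof (intro bexI[of _ "Some m"] ballI)
    fix b assume "b \<in> A"
    then show "(Some m, b) \<in> R" using m assms unfolding B_def by (auto simp: R_iff)
  qed (use m B_def in auto)
qed

lemma fmax: "finite G \<Longrightarrow> G \<noteq> {} \<Longrightarrow> G \<subseteq> Field r \<Longrightarrow> \<exists>m\<in>G. \<forall>g\<in>G. (g,m) \<in> r"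
proof (induction G rule: finite_ne_induct)
  case (singleton x) then show ?case using r_refl by auto
next
  case (insert x G)
  then obtain m where m: "m \<in> G" "\<forall>g\<in>G. (g,m) \<in> r" by auto
  show ?case
  proof (cases "(x,m) \<in> r")
    case True then show ?thesis using m by auto
  next
    case False
    then have "(m,x) \<in> r" using r_total insert m by blast
    then show ?thesis using m r_refl insert r_trans by blast
  qed
qed


lemma mu_empty: "mu {} = 0" unfolding mu_def wt_def by simp

lemma psi_cl: "closed (psi ` D)"
  unfolding closed_def
proof (subst open_subopen, intro ballI)
  fix x assume "x \<in> - psi ` D"
  then have xn: "x \<notin> psi ` D" by simp
  show "\<exists>T. open T \<and> x \<in> T \<and> T \<subseteq> - psi ` D"
  proof (cases "x < cc")
    case True
    have "\<not> psi u < cc" for u using psi_ge[of u] by simp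
    with True show ?thesis by (intro exI[of _ "{..<cc}"]) auto
  next
    case xc: False
    show ?thesis
    proof (cases "1 < x")
      case True
      have "\<not> 1 < psi u" if "u \<in> D" for u using psi_le1[OF that] by simp
      with True show ?thesis by (intro exI[of _ "{1<..}"]) auto
    next
      case False
      with psi_None xn have x1: "x < 1" by force
      define A where "A = {u \<in> D. x < psi u}"
      have "None \<in> A" using x1 psi_None by (simp add: A_def)
      then obtain a where aA: "a \<in> A" and al: "\<And>b. b \<in> A \<Longrightarrow> (a,b) \<in> R"
        using least[of A] unfolding A_def by blast
      have aD: "a \<in> D" and xa: "x < psi a" using aA by (auto simp: A_def)
      have below: "psi v < x" if "v \<in> D" "(v,a) \<in> R" "v \<noteq> a" for v
      proof -
        have "v \<notin> A" using al that R_antisym by blast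
        then have "psi v \<le> x" using that by (auto simp: A_def)
        moreover have "psi v \<noteq> x" using xn that by auto
        ultimately show ?thesis by simp
      qed
      show ?thesis
      proof (cases "\<exists>b\<in>D. (b,a) \<in> R \<and> b \<noteq> a \<and>
                 \<not> (\<exists>s\<in>D. (b,s) \<in> R \<and> b \<noteq> s \<and> (s,a) \<in> R \<and> s \<noteq> a)")
        case True
        then obtain b where b: "b \<in> D" "(b,a) \<in> R" "b \<noteq> a"
          and nb: "\<And>s. s \<in> D \<Longrightarrow> (b,s) \<in> R \<Longrightarrow> b \<noteq> s \<Longrightarrow> (s,a) \<in> R \<Longrightarrow> s = a" by blast
        have bx: "psi b < x" using below b by blast
        show ?thesis
        proof (intro exI[of _ "{psi b<..<psi a}"] conjI)
          show "open {psi b<..<psi a}" by simp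
          show "x \<in> {psi b<..<psi a}" using bx xa by simp
          show "{psi b<..<psi a} \<subseteq> - psi ` D"
          proof
            fix y assume y: "y \<in> {psi b<..<psi a}"
            show "y \<in> - psi ` D"
            proof
              assume "y \<in> psi ` D"
              then obtain d where d: "d \<in> D" "y = psi d" by auto
              have "(b,d) \<in> R" using R_total[OF d(1) b(1)] psi_mono y d by force
              moreover have "b \<noteq> d" using y d by auto
              moreover have "(a,d) \<in> R"
              proof (cases "(d,a) \<in> R")
                case True
                then have "d = a" using nb d(1) \<open>(b,d) \<in> R\<close> \<open>b \<noteq> d\<close> by blast
                then show ?thesis using R_refl aD by simp
              next
                case False then show ?thesis using R_total[OF d(1) aD] by blast
              qed
              ultimately show False using psi_mono y d by force
            qed
          qed
        qed
      next
        case False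
        then have between: "\<And>b. b \<in> D \<Longrightarrow> (b,a) \<in> R \<Longrightarrow> b \<noteq> a \<Longrightarrow>
             \<exists>s\<in>D. (b,s) \<in> R \<and> b \<noteq> s \<and> (s,a) \<in> R \<and> s \<noteq> a" by blast
        have "mu (e ` Bl a) \<le> x - cc"
        proof (rule mu_approx)
          fix G' assume G': "finite G'" "G' \<subseteq> e ` Bl a"
          then obtain G where G: "G \<subseteq> Bl a" "finite G" "G' = e ` G"
            using finite_subset_image by metis
          show "mu G' \<le> x - cc"
          proof (cases "G = {}")
            case True then show ?thesis using G xc mu_empty by simp
          next
            case False
            have GF: "G \<subseteq> Field r" using G by (auto simp: Bl_def)
            obtain m where m: "m \<in> G" "\<And>g. g \<in> G \<Longrightarrow> (g,m) \<in> r"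
              using fmax[OF G(2) False GF] by blast
            have mB: "(Some m, a) \<in> R" "Some m \<noteq> a" "m \<in> Field r" using m G by (auto simp: Bl_def)
            then obtain s where s: "s \<in> D" "(Some m, s) \<in> R" "Some m \<noteq> s" "(s,a) \<in> R" "s \<noteq> a"
              using between[of "Some m"] by auto
            have "G \<subseteq> Bl s"
            proof
              fix g assume gG: "g \<in> G"
              then have gm: "(Some g, Some m) \<in> R" using m by (simp add: R_iff)
              then have "(Some g, s) \<in> R" using R_trans s by blast
              moreover have "Some g \<noteq> s" using gm s R_antisym by blast
              ultimately show "g \<in> Bl s" using gG GF by (auto simp: Bl_def)
            qed
            then have "mu G' \<le> mu (e ` Bl s)" using G mu_mono by (simp add: image_mono)
            also have "\<dots> = psi s - cc" by (simp add: psi_def)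
            also have "\<dots> < x - cc" using below s by simp
            finally show ?thesis by simp
          qed
        qed
        then have "psi a \<le> x" by (simp add: psi_def)
        with xa show ?thesis by simp
      qed
    qed
  qed
qed

end

theorem corollary2p4:
  fixes r :: "('a \<times> 'a) set"
  assumes "Well_order r" and "countable (Field r)"
  shows "\<exists>g::real \<Rightarrow> real. continuous_on {0..1} g \<and> g ` {0..1} \<subseteq> {0..1} \<and>
           (\<exists>h. bij_betw h (chain_components g) (Field (ord_succ r)) \<and>
                (\<forall>A\<in>chain_components g. \<forall>B\<in>chain_components g.
                    comp_le g A B \<longleftrightarrow> (h B, h A) \<in> ord_succ r))"
proof -
  interpret O: ordc r using assms by unfold_locales
  have Fsub: "O.psi ` O.D \<subseteq> {0..1}"
  proof
    fix x assume "x \<in> O.psi ` O.D"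
    then obtain u where u: "u \<in> O.D" "x = O.psi u" by blast
    show "x \<in> {0..1}" using O.psi_ge[of u] O.cc_nonneg O.psi_le1[OF u(1)] u(2) by simp
  qed
  have Fc: "countable (O.psi ` O.D)"
    by (intro countable_image countable_insert) (rule O.CF)
  have F1: "1 \<in> O.psi ` O.D" using O.psi_None by (intro rev_image_eqI[of None]) simp_all
  interpret Dy: dyn "O.psi ` O.D" using O.psi_cl Fsub Fc F1 by unfold_locales
  define h where "h = (\<lambda>A. the_inv_into O.D O.psi (the_elem A))"
  have hpsi: "h {O.psi a} = a" if "a \<in> O.D" for a
    unfolding h_def the_elem_eq using the_inv_into_f_f[OF O.psi_inj that] .
  have CC: "chain_components Dy.gg = (\<lambda>a. {O.psi a}) ` O.D" unfolding Dy.CC by (simp add: image_image)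
  show ?thesis
  proof (intro exI[of _ Dy.gg] conjI exI[of _ h] Dy.gg_cont Dy.gg_range ballI)
    show "bij_betw h (chain_components Dy.gg) (Field (ord_succ r))"
      unfolding CC O.D_eq
    proof (rule bij_betw_imageI)
      show "inj_on h ((\<lambda>a. {O.psi a}) ` O.D)"
      proof (rule inj_onI)
        fix A B assume "A \<in> (\<lambda>a. {O.psi a}) ` O.D" "B \<in> (\<lambda>a. {O.psi a}) ` O.D" "h A = h B"
        then obtain a b where "a \<in> O.D" "b \<in> O.D" "A = {O.psi a}" "B = {O.psi b}" "h A = h B" by blast
        then show "A = B" using hpsi by metis
      qed
      show "h ` (\<lambda>a. {O.psi a}) ` O.D = O.D"
        unfolding image_image using hpsi by (simp cong: image_cong)
    qed
  next
    fix A B assume "A \<in> chain_components Dy.gg" "B \<in> chain_components Dy.gg"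
    then obtain a b where ab: "a \<in> O.D" "b \<in> O.D" "A = {O.psi a}" "B = {O.psi b}" unfolding CC by blast
    have "comp_le Dy.gg A B \<longleftrightarrow> O.psi b \<le> O.psi a"
      unfolding ab(3,4) by (rule Dy.comp_le_F) (use ab in blast)+
    also have "\<dots> \<longleftrightarrow> (b, a) \<in> ord_succ r" using O.psi_iff[OF ab(2,1)] by simp
    also have "\<dots> \<longleftrightarrow> (h B, h A) \<in> ord_succ r" using hpsi ab by simp
    finally show "comp_le Dy.gg A B \<longleftrightarrow> (h B, h A) \<in> ord_succ r" .
  qed
qed

end
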